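(* Let $C\subseteq\mathbb{F}_2^n$ be a binary linear constant weight code of dimension $k\ge2$. Then $\mathrm{PAut}(C)\cong S_3$ if and only if $k=2$, the weight of $C$ is $2$, and $n\in\{3,4\}$.
   Context: A binary linear constant weight code of weight $w$ is an $\mathbb{F}_2$-subspace of $\mathbb{F}_2^n$ all of whose non-zero vectors have exactly $w$ coordinates equal to $1$. $S_n$ acts on $\mathbb{F}_2^n$ by $\sigma(v_1,\dots,v_n)=(v_{\sigma^{-1}(1)},\dots,v_{\sigma^{-1}(n)})$, and $\mathrm{PAut}(C)=\{\sigma\in S_n:\sigma(C)=C\}$. *)

theory Defs
  imports "HOL.Vector_Spaces" "HOL-Library.Z2" "HOL-Library.Function_Algebras" "HOL-Algebra.Sym_Groups"
begin

text \<open>Vectors of F_2^n are functions nat => bit vanishing outside {0..<n}.\<close>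

definition f2scale :: "bit \<Rightarrow> (nat \<Rightarrow> bit) \<Rightarrow> (nat \<Rightarrow> bit)" where
  "f2scale a v = (\<lambda>i. a * v i)"

definition F2n :: "nat \<Rightarrow> (nat \<Rightarrow> bit) set" where
  "F2n n = {v. \<forall>i. n \<le> i \<longrightarrow> v i = 0}"

definition binary_linear_code :: "nat \<Rightarrow> (nat \<Rightarrow> bit) set \<Rightarrow> bool" where
  "binary_linear_code n C \<longleftrightarrow> C \<subseteq> F2n n \<and> Modules.module.subspace f2scale C"

definition hweight :: "(nat \<Rightarrow> bit) \<Rightarrow> nat" where
  "hweight v = card {i. v i = 1}"

definition constant_weight_code :: "nat \<Rightarrow> nat \<Rightarrow> (nat \<Rightarrow> bit) set \<Rightarrow> bool" where
  "constant_weight_code n w C \<longleftrightarrow>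
     binary_linear_code n C \<and> (\<forall>v\<in>C. v \<noteq> 0 \<longrightarrow> hweight v = w)"

definition code_dim :: "(nat \<Rightarrow> bit) set \<Rightarrow> nat" where
  "code_dim C = Vector_Spaces.vector_space.dim f2scale C"

definition perm_act :: "(nat \<Rightarrow> nat) \<Rightarrow> (nat \<Rightarrow> bit) \<Rightarrow> (nat \<Rightarrow> bit)" where
  "perm_act \<sigma> v = (\<lambda>i. v (inv_into UNIV \<sigma> i))"

definition PAut :: "nat \<Rightarrow> (nat \<Rightarrow> bit) set \<Rightarrow> (nat \<Rightarrow> nat) set" where
  "PAut n C = {\<sigma>. \<sigma> permutes {0..<n} \<and> perm_act \<sigma> ` C = C}"

definition PAut_group :: "nat \<Rightarrow> (nat \<Rightarrow> bit) set \<Rightarrow> (nat \<Rightarrow> nat) monoid" where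
  "PAut_group n C = \<lparr>carrier = PAut n C, mult = (\<circ>), one = id\<rparr>"

end

theory Submission
  imports Defs
begin

lemma bit_cases: "(x::bit) = 0 \<or> x = 1" by auto
lemma bit_add_self[simp]: "(x::bit) + x = 0" by (cases x) auto

global_interpretation F2: vector_space f2scale
  by unfold_locales (auto simp: f2scale_def fun_eq_iff algebra_simps)

lemma fun_add_self[simp]: "(x::nat\<Rightarrow>bit) + x = 0"
  by (auto simp: fun_eq_iff)

lemma finite_F2n: "finite (F2n n)"
proof -
  have "F2n n = {f. \<forall>x. (x \<in> {0..<n} \<longrightarrow> f x \<in> (UNIV::bit set)) \<and> (x \<notin> {0..<n} \<longrightarrow> f x = 0)}"
    by (auto simp: F2n_def)
  moreover have "finite (UNIV::bit set)" proof - have "(UNIV::bit set) = {0,1}" using bit_cases by auto thus ?thesis by (metis finite.emptyI finite.insertI) qed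
  ultimately show ?thesis using finite_set_of_finite_funs[of "{0..<n}" "UNIV::bit set" 0] by simp
qed

locale cwc =
  fixes n w :: nat and C :: "(nat \<Rightarrow> bit) set"
  assumes cw: "constant_weight_code n w C"
begin

lemma sub: "C \<subseteq> F2n n" using cw by (simp add: constant_weight_code_def binary_linear_code_def)
lemma subsp: "F2.subspace C" using cw by (simp add: constant_weight_code_def binary_linear_code_def)
lemma zero[simp]: "0 \<in> C" using F2.subspace_0[OF subsp] .
lemma add[simp]: "x \<in> C \<Longrightarrow> y \<in> C \<Longrightarrow> x + y \<in> C" using F2.subspace_add[OF subsp] .
lemma wt: "v \<in> C \<Longrightarrow> v \<noteq> 0 \<Longrightarrow> hweight v = w" using cw by (simp add: constant_weight_code_def)
lemma fin[simp]: "finite C" using finite_subset[OF sub finite_F2n] .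
lemma out: "c \<in> C \<Longrightarrow> n \<le> l \<Longrightarrow> c l = 0" using sub by (auto simp: F2n_def)

lemma hweight_eq: "c \<in> C \<Longrightarrow> hweight c = card {l\<in>{0..<n}. c l = 1}"
  unfolding hweight_def by (rule arg_cong[where f=card]) (auto dest: out simp: not_le[symmetric])

definition lin :: "((nat \<Rightarrow> bit) \<Rightarrow> bit) \<Rightarrow> bool" where
  "lin g \<longleftrightarrow> (\<forall>x\<in>C. \<forall>y\<in>C. g (x + y) = g x + g y)"

lemma lin_zero: "lin g \<Longrightarrow> g 0 = 0"
  unfolding lin_def by (metis zero add_0 add.right_neutral bit_add_self add_left_cancel)

lemma lin_col: "lin (\<lambda>c. c l)" by (simp add: lin_def)
lemma lin_col2: "lin (\<lambda>c. c l + c a)" unfolding lin_def plus_fun_apply by (simp add: ac_simps del: add_bit_eq_xor)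

definition nz :: "nat set" where "nz = {l\<in>{0..<n}. \<exists>c\<in>C. c l = 1}"
definition mlt :: "((nat \<Rightarrow> bit) \<Rightarrow> bit) \<Rightarrow> nat" where
  "mlt g = card {l\<in>{0..<n}. \<forall>c\<in>C. c l = g c}"

lemma half:
  assumes "lin g" "c0 \<in> C" "g c0 = 1"
  shows "2 * card {c\<in>C. g c = 1} = card C"
proof -
  let ?A = "{c\<in>C. g c = 1}" and ?B = "{c\<in>C. g c = 0}"
  have "bij_betw (\<lambda>c. c + c0) ?B ?A"
  proof (rule bij_betw_byWitness[where f'="\<lambda>c. c + c0"])
    show "\<forall>a\<in>?B. a + c0 + c0 = a" "\<forall>a\<in>?A. a + c0 + c0 = a" by (simp_all add: add.assoc)
    show "(\<lambda>c. c + c0) ` ?B \<subseteq> ?A" using assms by (auto simp: lin_def)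
    show "(\<lambda>c. c + c0) ` ?A \<subseteq> ?B" using assms by (auto simp: lin_def)
  qed
  hence "card ?B = card ?A" by (rule bij_betw_same_card)
  moreover have "C = ?A \<union> ?B" using bit_cases by auto
  moreover have "card (?A \<union> ?B) = card ?A + card ?B"
    by (rule card_Un_disjoint) auto
  ultimately show ?thesis by simp
qed

lemma trans_card:
  assumes "lin g" "lin h" "t \<in> C" "g t = a" "h t = b"
  shows "card {c\<in>C. g c = a' \<and> h c = b'} = card {c\<in>C. g c = a' + a \<and> h c = b' + b}"
proof (rule bij_betw_same_card[of "\<lambda>c. c + t"], rule bij_betw_byWitness[where f'="\<lambda>c. c + t"])
  show "\<forall>x\<in>{c \<in> C. g c = a' \<and> h c = b'}. x + t + t = x" by (simp add: add.assoc)
  show "\<forall>x\<in>{c \<in> C. g c = a' + a \<and> h c = b' + b}. x + t + t = x" by (simp add: add.assoc)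
  show "(\<lambda>c. c + t) ` {c \<in> C. g c = a' \<and> h c = b'} \<subseteq> {c \<in> C. g c = a' + a \<and> h c = b' + b}"
    using assms by (auto simp: lin_def)
  show "(\<lambda>c. c + t) ` {c \<in> C. g c = a' + a \<and> h c = b' + b} \<subseteq> {c \<in> C. g c = a' \<and> h c = b'}"
  proof
    fix z assume "z \<in> (\<lambda>c. c + t) ` {c \<in> C. g c = a' + a \<and> h c = b' + b}"
    then obtain c where c: "c \<in> C" "g c = a' + a" "h c = b' + b" "z = c + t" by auto
    have "g z = a' + a + a" "h z = b' + b + b" using assms c by (auto simp: lin_def)
    thus "z \<in> {c \<in> C. g c = a' \<and> h c = b'}" using c assms
      by (simp add: add.assoc del: add_bit_eq_xor)
  qed
qed

lemma quarter:
  assumes g: "lin g" and h: "lin h" and x: "x \<in> C" "g x = 1" and y: "y \<in> C" "h y = 1"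
    and d: "d \<in> C" "g d \<noteq> h d"
  shows "4 * card {c\<in>C. g c = 1 \<and> h c = 1} = card C"
proof -
  define cell where "cell a b = {c\<in>C. g c = a \<and> h c = b}" for a b
  have L: "g (p + q) = g p + g q" "h (p + q) = h p + h q" if "p \<in> C" "q \<in> C" for p q
    using g h that by (auto simp: lin_def)
  have e11: "\<exists>t\<in>C. g t = 1 \<and> h t = 1"
  proof (cases "h x = 1")
    case True thus ?thesis using x by blast
  next
    case False
    hence hx: "h x = 0" by simp
    show ?thesis
    proof (cases "g y = 1")
      case True thus ?thesis using y by blast
    next
      case False
      hence "g y = 0" by simp
      hence "g (x+y) = 1 \<and> h (x+y) = 1" using x y hx L[of x y] by simp
      thus ?thesis using x y by (intro bexI[of _ "x+y"]) simp_all
    qed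
  qed
  have e10: "\<exists>t\<in>C. g t = 1 \<and> h t = 0"
  proof (cases "h x = 0")
    case True thus ?thesis using x by blast
  next
    case False
    hence hx: "h x = 1" by simp
    show ?thesis
    proof (cases "g d = 1")
      case True
      hence "h d = 0" using d(2) by simp
      thus ?thesis using True d by blast
    next
      case False
      hence "g d = 0" "h d = 1" using d(2) by simp_all
      hence "g (x+d) = 1 \<and> h (x+d) = 0" using x d hx L[of x d] by simp
      thus ?thesis using x d by (intro bexI[of _ "x+d"]) simp_all
    qed
  qed
  have e01: "\<exists>t\<in>C. g t = 0 \<and> h t = 1"
  proof (cases "g y = 0")
    case True thus ?thesis using y by blast
  next
    case False
    hence gy: "g y = 1" by simp
    show ?thesis
    proof (cases "g d = 0")
      case True
      hence "h d = 1" using d(2) by simp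
      thus ?thesis using True d by blast
    next
      case False
      hence "g d = 1" "h d = 0" using d(2) by simp_all
      hence "g (y+d) = 0 \<and> h (y+d) = 1" using y d gy L[of y d] by simp
      thus ?thesis using y d by (intro bexI[of _ "y+d"]) simp_all
    qed
  qed
  have e00: "\<exists>t\<in>C. g t = 0 \<and> h t = 0" by (intro bexI[of _ 0]) (simp_all add: lin_zero[OF g] lin_zero[OF h])
  have ex: "\<exists>t\<in>C. g t = a \<and> h t = b" for a b
  proof -
    have "a = 0 \<or> a = 1" "b = 0 \<or> b = 1" using bit_cases by blast+
    thus ?thesis using e00 e01 e10 e11 by blast
  qed
  have eq: "card (cell a b) = card (cell 0 0)" for a b
  proof -
    obtain t where t: "t \<in> C" "g t = a" "h t = b" using ex by blast
    have "card {c\<in>C. g c = 0 \<and> h c = 0} = card {c\<in>C. g c = 0 + a \<and> h c = 0 + b}"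
      by (rule trans_card[OF g h t])
    thus ?thesis unfolding cell_def add_0 by (rule sym)
  qed
  have "C = (cell 0 0 \<union> cell 0 1) \<union> (cell 1 0 \<union> cell 1 1)"
    unfolding cell_def using bit_cases by blast
  moreover have "card ((cell 0 0 \<union> cell 0 1) \<union> (cell 1 0 \<union> cell 1 1))
     = (card (cell 0 0) + card (cell 0 1)) + (card (cell 1 0) + card (cell 1 1))"
  proof -
    have "card (cell 0 0 \<union> cell 0 1) = card (cell 0 0) + card (cell 0 1)"
      by (rule card_Un_disjoint) (auto simp: cell_def)
    moreover have "card (cell 1 0 \<union> cell 1 1) = card (cell 1 0) + card (cell 1 1)"
      by (rule card_Un_disjoint) (auto simp: cell_def)
    moreover have "card ((cell 0 0 \<union> cell 0 1) \<union> (cell 1 0 \<union> cell 1 1)) = card (cell 0 0 \<union> cell 0 1) + card (cell 1 0 \<union> cell 1 1)"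
      by (rule card_Un_disjoint) (auto simp: cell_def)
    ultimately show ?thesis by simp
  qed
  ultimately have "card C = 4 * card (cell 0 0)" using eq[of 0 1] eq[of 1 0] eq[of 1 1] by simp
  thus ?thesis using eq[of 1 1] by (simp add: cell_def)
qed

lemma count_main:
  assumes g: "lin g" and c0: "c0 \<in> C" "g c0 = 1"
  shows "mlt g + card nz = 2 * w"
proof -
  define A where "A = {c\<in>C. g c = 1}"
  define M where "M = {l\<in>{0..<n}. \<forall>c\<in>C. c l = g c}"
  define N where "N = nz - M"
  define Z where "Z = {0..<n} - nz"
  define F where "F l = card {c\<in>A. c l = 1}" for l
  have finA: "finite A" by (simp add: A_def)
  have hA: "2 * card A = card C" unfolding A_def by (rule half[OF g c0])
  have cA: "card A > 0" using c0 finA by (auto simp: A_def card_gt_0_iff)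
  have MN: "M \<subseteq> nz" using c0 by (auto simp: M_def nz_def)
  have S1: "(\<Sum>c\<in>A. hweight c) = card A * w"
  proof -
    have "(\<Sum>c\<in>A. hweight c) = (\<Sum>c\<in>A. w)"
    proof (rule sum.cong[OF refl])
      fix c assume "c \<in> A"
      hence "c \<in> C" "c \<noteq> 0" using lin_zero[OF g] by (auto simp: A_def)
      thus "hweight c = w" by (rule wt)
    qed
    thus ?thesis by simp
  qed
  have S2: "(\<Sum>c\<in>A. hweight c) = (\<Sum>l\<in>{0..<n}. F l)"
  proof -
    have "(\<Sum>c\<in>A. hweight c) = (\<Sum>c\<in>A. \<Sum>l\<in>{0..<n}. if c l = 1 then 1 else 0)"
    proof (rule sum.cong[OF refl])
      fix c assume "c \<in> A" hence "c \<in> C" by (simp add: A_def)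
      hence "hweight c = card {l\<in>{0..<n}. c l = 1}" by (rule hweight_eq)
      also have "\<dots> = (\<Sum>l\<in>{0..<n}. if c l = 1 then 1 else 0)"
        by (simp only: card_eq_sum sum.inter_filter[OF finite_atLeastLessThan])
      finally show "hweight c = (\<Sum>l\<in>{0..<n}. if c l = 1 then 1 else 0)" .
    qed
    also have "\<dots> = (\<Sum>l\<in>{0..<n}. \<Sum>c\<in>A. if c l = 1 then 1 else 0)" by (rule sum.swap)
    also have "\<dots> = (\<Sum>l\<in>{0..<n}. F l)"
      unfolding F_def by (simp only: card_eq_sum sum.inter_filter[OF finA])
    finally show ?thesis .
  qed
  have split: "{0..<n} = M \<union> (N \<union> Z)" using MN by (auto simp: N_def Z_def nz_def M_def)
  have S3: "(\<Sum>l\<in>{0..<n}. F l) = (\<Sum>l\<in>M. F l) + ((\<Sum>l\<in>N. F l) + (\<Sum>l\<in>Z. F l))"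
  proof -
    have fM: "finite M" "finite N" "finite Z" by (auto simp: M_def N_def Z_def nz_def)
    have "sum F (N \<union> Z) = sum F N + sum F Z"
      by (rule sum.union_disjoint) (use fM in \<open>auto simp: N_def Z_def\<close>)
    moreover have "sum F (M \<union> (N \<union> Z)) = sum F M + sum F (N \<union> Z)"
      by (rule sum.union_disjoint) (use fM MN in \<open>auto simp: N_def Z_def\<close>)
    ultimately show ?thesis unfolding split by simp
  qed
  have FM: "F l = card A" if "l \<in> M" for l
    using that unfolding F_def M_def A_def by (metis (mono_tags, lifting) mem_Collect_eq)
  have FZ: "F l = 0" if "l \<in> Z" for l
  proof -
    have "{c\<in>A. c l = 1} = {}" using that by (auto simp: Z_def nz_def A_def)
    thus ?thesis unfolding F_def by (metis card.empty)
  qed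
  have FN: "4 * F l = card C" if "l \<in> N" for l
  proof -
    from that have l: "l < n" "\<exists>c\<in>C. c l = 1" "\<not> (\<forall>c\<in>C. c l = g c)"
      by (auto simp: N_def nz_def M_def)
    then obtain y d where y: "y \<in> C" "y l = 1" and d: "d \<in> C" "g d \<noteq> d l" by metis
    have "4 * card {c\<in>C. g c = 1 \<and> c l = 1} = card C"
      by (rule quarter[OF g lin_col c0 y d])
    moreover have "{c\<in>C. g c = 1 \<and> c l = 1} = {c\<in>A. c l = 1}" by (auto simp: A_def)
    ultimately show ?thesis by (simp add: F_def)
  qed
  have "(\<Sum>l\<in>M. F l) = card M * card A" using FM by simp
  moreover have "(\<Sum>l\<in>Z. F l) = 0" using FZ by simp
  moreover have "4 * (\<Sum>l\<in>N. F l) = card N * card C"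
    by (simp add: sum_distrib_left FN)
  ultimately have "4 * (card A * w) = 4 * (card M * card A) + card N * card C"
    using S1 S2 S3 by (simp add: algebra_simps)
  hence "4 * (card A * w) = 4 * (card M * card A) + card N * (2 * card A)" using hA by simp
  hence "(2 * w) * (2 * card A) = (2 * card M + card N) * (2 * card A)" by (simp add: algebra_simps)
  hence "2 * w = 2 * card M + card N" using cA by simp
  moreover have "card nz = card M + card N"
  proof -
    have "nz = M \<union> N" using MN by (auto simp: N_def)
    moreover have "finite nz" by (simp add: nz_def)
    ultimately show ?thesis using MN by (simp add: N_def card_Diff_subset card_mono finite_subset)
  qed
  moreover have "mlt g = card M" by (simp add: mlt_def M_def)
  ultimately show ?thesis by simp
qed

end

lemma perm_act_id: "perm_act id v = v"
  by (simp add: perm_act_def inv_id fun_eq_iff)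

lemma id_PAut: "id \<in> PAut n C"
  by (simp add: PAut_def perm_act_id)

lemma S3_no_klein:
  assumes iso: "PAut_group n C \<cong> sym_group 3"
    and s1: "s1 \<in> PAut n C" and s2: "s2 \<in> PAut n C"
    and i1: "s1 \<circ> s1 = id" and i2: "s2 \<circ> s2 = id" and cm: "s1 \<circ> s2 = s2 \<circ> s1"
    and n1: "s1 \<noteq> id" and n2: "s2 \<noteq> id" and n12: "s1 \<noteq> s2"
  shows False
proof -
  let ?G = "sym_group 3"
  obtain f where f: "f \<in> hom (PAut_group n C) ?G" "bij_betw f (PAut n C) (carrier ?G)"
    using iso unfolding is_iso_def iso_def by (auto simp: PAut_group_def)
  have hom: "f (x \<circ> y) = f x \<circ> f y" if "x \<in> PAut n C" "y \<in> PAut n C" for x y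
    using f(1) that by (auto simp: hom_def PAut_group_def sym_group_def)
  have inj: "inj_on f (PAut n C)" using f(2) by (simp add: bij_betw_def)
  have mem: "f x \<in> carrier ?G" if "x \<in> PAut n C" for x
    using f(2) that by (auto simp: bij_betw_def)
  have idP: "id \<in> PAut n C" by (rule id_PAut)
  have fid: "f id = id"
  proof -
    have "f id \<circ> f id = f id" using hom[OF idP idP] by simp
    moreover have "f id permutes {1..3}" using mem[OF idP] by (simp add: sym_group_carrier)
    hence "surj (f id)" by (simp add: permutes_surj)
    ultimately have "f id x = x" for x
    proof -
      assume e: "f id \<circ> f id = f id" and s: "surj (f id)"
      obtain y where y: "x = f id y" using s by (metis surjD)
      have "f id x = (f id \<circ> f id) y" using y by simp
      also have "\<dots> = x" using e y by simp
      finally show ?thesis .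
    qed
    thus ?thesis by (simp add: fun_eq_iff)
  qed
  define a where "a = f s1"
  define b where "b = f s2"
  have aG: "a \<in> carrier ?G" and bG: "b \<in> carrier ?G" using mem s1 s2 by (auto simp: a_def b_def)
  have aa: "a \<circ> a = id" using hom[OF s1 s1] i1 fid by (simp add: a_def)
  have bb: "b \<circ> b = id" using hom[OF s2 s2] i2 fid by (simp add: b_def)
  have ab: "a \<circ> b = b \<circ> a" using hom[OF s1 s2] hom[OF s2 s1] cm by (simp add: a_def b_def)
  have na: "a \<noteq> id" using inj_onD[OF inj _ s1 idP] n1 fid by (auto simp: a_def)
  have nb: "b \<noteq> id" using inj_onD[OF inj _ s2 idP] n2 fid by (auto simp: b_def)
  have nab: "a \<noteq> b" using inj_onD[OF inj _ s1 s2] n12 by (auto simp: a_def b_def)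
  have gG: "group ?G" by (rule sym_group_is_group)
  define H where "H = {id, a, b, a \<circ> b}"
  have abG: "a \<circ> b \<in> carrier ?G" using aG bG by (simp add: sym_group_carrier permutes_compose)
  have aab: "a \<circ> (a \<circ> b) = b" using aa by (simp add: o_assoc)
  have bab: "b \<circ> (a \<circ> b) = a" by (simp add: ab o_assoc bb)
  have aba: "(a \<circ> b) \<circ> a = b" by (simp add: ab o_assoc[symmetric] aa)
  have abb: "(a \<circ> b) \<circ> b = a" by (simp add: o_assoc[symmetric] bb)
  have abab: "(a \<circ> b) \<circ> (a \<circ> b) = id" by (simp only: o_assoc[symmetric] bab aa)
  have sub: "subgroup H ?G"
  proof
    show "H \<subseteq> carrier ?G" using aG bG abG
      by (auto simp: H_def sym_group_one sym_group_carrier)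
    show "\<one>\<^bsub>?G\<^esub> \<in> H" by (simp add: H_def sym_group_one)
    fix x y assume x: "x \<in> H" and y: "y \<in> H"
    show "x \<otimes>\<^bsub>?G\<^esub> y \<in> H"
      using x y unfolding H_def sym_group_mult
      by (elim insertE emptyE; simp only: aa bb ab[symmetric] aab bab aba abb abab id_o o_id; simp)
  next
    fix x assume x: "x \<in> H"
    have xx: "x \<circ> x = id" using x aa bb abab by (auto simp: H_def)
    have xG: "x \<in> carrier ?G" using x aG bG abG
      by (auto simp: H_def sym_group_one sym_group_carrier)
    have "inv\<^bsub>?G\<^esub> x = x"
      using group.inv_equality[OF gG _ xG xG] xx by (simp add: sym_group_mult sym_group_one)
    thus "inv\<^bsub>?G\<^esub> x \<in> H" using x by simp
  qed
  have d1: "a \<circ> b \<noteq> id"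
  proof
    assume "a \<circ> b = id" hence "a \<circ> (a \<circ> b) = a" by simp
    with aab nab show False by simp
  qed
  have d2: "a \<circ> b \<noteq> a"
  proof
    assume "a \<circ> b = a" hence "a \<circ> (a \<circ> b) = a \<circ> a" by simp
    with aab aa nb show False by simp
  qed
  have d3: "a \<circ> b \<noteq> b"
  proof
    assume "a \<circ> b = b" hence "(a \<circ> b) \<circ> b = b \<circ> b" by simp
    with abb bb na show False by simp
  qed
  have cH: "card H = 4" using na nb nab d1 d2 d3 by (simp add: H_def)
  have "card (rcosets\<^bsub>?G\<^esub> H) * card H = order ?G" by (rule group.lagrange[OF gG sub])
  moreover have "order ?G = 6"
  proof -
    have "card {p. p permutes {1..3::nat}} = fact 3" by (rule card_permutations) simp_all
    thus ?thesis unfolding order_def sym_group_def by (simp add: fact_numeral)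
  qed
  ultimately have "card (rcosets\<^bsub>?G\<^esub> H) * 4 = 6" using cH by simp
  thus False by presburger
qed


lemma perm_act_invol: "\<sigma> \<circ> \<sigma> = id \<Longrightarrow> perm_act \<sigma> c = c \<circ> \<sigma>"
  unfolding perm_act_def using inv_unique_comp[of \<sigma> \<sigma>] by (simp add: fun_eq_iff)

declare add_bit_eq_xor[simp del]
lemma bit_one_one[simp]: "(1::bit) + 1 = 0" by simp
lemma bit_add_twice[simp]: "(x::bit) + y + y = x"
  by (metis add.assoc bit_add_self add.right_neutral)
lemma bit_eq_add_cancel: "(x::bit) = x + y \<longleftrightarrow> y = 0"
  by (metis add.right_neutral add_left_cancel)

context cwc
begin

lemma PAut_invol:
  assumes ii: "\<sigma> \<circ> \<sigma> = id" and out: "\<And>x. n \<le> x \<Longrightarrow> \<sigma> x = x"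
    and cl: "\<And>c. c \<in> C \<Longrightarrow> c \<circ> \<sigma> \<in> C"
  shows "\<sigma> \<in> PAut n C"
proof -
  have s: "\<sigma> (\<sigma> x) = x" for x using ii by (metis comp_apply id_apply)
  have "\<sigma> permutes {0..<n}"
    unfolding permutes_def using out s by (metis atLeastLessThan_iff not_le zero_le)
  moreover have "perm_act \<sigma> ` C = C"
  proof
    show "perm_act \<sigma> ` C \<subseteq> C" using cl perm_act_invol[OF ii] by auto
    show "C \<subseteq> perm_act \<sigma> ` C"
    proof
      fix c assume c: "c \<in> C"
      have "c = perm_act \<sigma> (c \<circ> \<sigma>)" using perm_act_invol[OF ii] ii by (simp add: o_assoc[symmetric])
      thus "c \<in> perm_act \<sigma> ` C" using cl[OF c] by blast
    qed
  qed
  ultimately show ?thesis by (simp add: PAut_def)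
qed

lemma swap_PAut:
  assumes "i < n" "j < n" "\<And>c. c \<in> C \<Longrightarrow> c i = c j"
  shows "Transposition.transpose i j \<in> PAut n C"
proof (rule PAut_invol)
  show "Transposition.transpose i j \<circ> Transposition.transpose i j = id" by simp
  show "n \<le> x \<Longrightarrow> Transposition.transpose i j x = x" for x using assms by (simp add: transpose_def)
  fix c assume c: "c \<in> C"
  have "c \<circ> Transposition.transpose i j = c" using assms(3)[OF c] by (auto simp: fun_eq_iff transpose_def)
  thus "c \<circ> Transposition.transpose i j \<in> C" using c by simp
qed

definition tt where "tt = 2 * w - card nz"

lemma mlt_tt: "lin g \<Longrightarrow> c0 \<in> C \<Longrightarrow> g c0 = 1 \<Longrightarrow> mlt g = tt"
  using count_main[of g c0] unfolding tt_def by simp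

lemma nz_ex: "c \<in> C \<Longrightarrow> c \<noteq> 0 \<Longrightarrow> \<exists>i. i \<in> nz \<and> c i = 1"
proof -
  assume c: "c \<in> C" "c \<noteq> 0"
  then obtain i where "c i \<noteq> 0" by (auto simp: fun_eq_iff)
  hence "c i = 1" by simp
  moreover have "i < n" using out[OF c(1), of i] \<open>c i = 1\<close> by (metis not_le zero_neq_one)
  ultimately show ?thesis using c by (auto simp: nz_def)
qed

definition cls where "cls i = {j\<in>{0..<n}. \<forall>c\<in>C. c j = c i}"

lemma cls_card: "i \<in> nz \<Longrightarrow> card (cls i) = tt"
proof -
  assume "i \<in> nz"
  then obtain c0 where "c0 \<in> C" "c0 i = 1" by (auto simp: nz_def)
  thus ?thesis using mlt_tt[OF lin_col, of c0 i] by (simp add: mlt_def cls_def)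
qed

lemma cls_self: "i \<in> nz \<Longrightarrow> i \<in> cls i" by (auto simp: cls_def nz_def)
lemma fin_cls: "finite (cls i)" by (simp add: cls_def)
lemma fin_nz: "finite nz" by (simp add: nz_def)

lemma tt_pos: "i \<in> nz \<Longrightarrow> tt \<ge> 1"
  using cls_card[of i] cls_self[of i] fin_cls[of i] by (metis card_0_eq empty_iff less_one not_le)

lemma col_uniq:
  assumes t1: "tt = 1" and g: "lin g" and c0: "c0 \<in> C" "g c0 = 1"
    and j1: "j1 < n" "\<And>c. c \<in> C \<Longrightarrow> c j1 = g c"
    and j2: "j2 < n" "\<And>c. c \<in> C \<Longrightarrow> c j2 = g c"
  shows "j1 = j2"
proof -
  have "card {l\<in>{0..<n}. \<forall>c\<in>C. c l = g c} = 1" using mlt_tt[OF g c0] t1 by (simp add: mlt_def)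
  then obtain j where "{l\<in>{0..<n}. \<forall>c\<in>C. c l = g c} = {j}" by (rule card_1_singletonE)
  moreover have "j1 \<in> {l\<in>{0..<n}. \<forall>c\<in>C. c l = g c}" "j2 \<in> {l\<in>{0..<n}. \<forall>c\<in>C. c l = g c}"
    using j1 j2 by auto
  ultimately show ?thesis by (metis singletonD)
qed

lemma col_ex:
  assumes g: "lin g" and c0: "c0 \<in> C" "g c0 = 1" and t: "tt \<ge> 1"
  shows "\<exists>j. j < n \<and> (\<forall>c\<in>C. c j = g c)"
proof -
  have "card {l\<in>{0..<n}. \<forall>c\<in>C. c l = g c} \<ge> 1" using mlt_tt[OF g c0] t by (simp add: mlt_def)
  hence "{l\<in>{0..<n}. \<forall>c\<in>C. c l = g c} \<noteq> {}" by (metis card.empty not_one_le_zero)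
  thus ?thesis by auto
qed

definition tv :: "(nat \<Rightarrow> bit) \<Rightarrow> nat \<Rightarrow> nat \<Rightarrow> nat" where
  "tv u a i = (if i < n \<and> u i = 1 then (THE j. j < n \<and> (\<forall>c\<in>C. c j = c i + c a)) else i)"

lemma tv_spec:
  assumes t1: "tt = 1" and u: "u \<in> C" "u a = 0" and i: "i < n" "u i = 1"
  shows "tv u a i < n \<and> (\<forall>c\<in>C. c (tv u a i) = c i + c a)"
proof -
  let ?g = "\<lambda>c. c i + c a"
  have gu: "?g u = 1" using u i by simp
  obtain j where j: "j < n" "\<forall>c\<in>C. c j = ?g c" using col_ex[OF lin_col2 u(1) gu] t1 by auto
  have "\<exists>!j. j < n \<and> (\<forall>c\<in>C. c j = c i + c a)"
  proof (rule ex1I[of _ j])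
    show "j < n \<and> (\<forall>c\<in>C. c j = c i + c a)" using j by simp
    fix y assume "y < n \<and> (\<forall>c\<in>C. c y = c i + c a)"
    thus "y = j" using col_uniq[OF t1 lin_col2 u(1) gu, of y j] j by auto
  qed
  hence th: "(THE j. j < n \<and> (\<forall>c\<in>C. c j = c i + c a)) < n \<and>
         (\<forall>c\<in>C. c (THE j. j < n \<and> (\<forall>c\<in>C. c j = c i + c a)) = c i + c a)"
    by (rule theI')
  have eq: "tv u a i = (THE j. j < n \<and> (\<forall>c\<in>C. c j = c i + c a))"
    unfolding tv_def using i by (simp only: if_P conj_absorb)
  show ?thesis unfolding eq by (rule th)
qed

lemma tv_u:
  assumes "tt = 1" "u \<in> C" "u a = 0" "i < n" "u i = 1"
  shows "u (tv u a i) = 1"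
proof -
  have "u (tv u a i) = u i + u a" using tv_spec[OF assms] assms(2) by blast
  thus ?thesis using assms by simp
qed

lemma tv_ne:
  assumes "tt = 1" "u \<in> C" "u a = 0" "i < n" "u i = 1" and ca: "ca \<in> C" "ca a = 1"
  shows "tv u a i \<noteq> i"
proof
  assume "tv u a i = i"
  hence "ca i = ca i + ca a" using tv_spec[OF assms(1-5)] ca by metis
  thus False using ca by (simp add: bit_eq_add_cancel)
qed

lemma tv_out: "n \<le> x \<Longrightarrow> tv u a x = x" by (simp add: tv_def)

lemma tv_fix: assumes "\<not> (x < n \<and> u x = 1)" shows "tv u a x = x"
  unfolding tv_def by (rule if_not_P[OF assms])

lemma tv_invol:
  assumes t1: "tt = 1" and u: "u \<in> C" "u a = 0"
  shows "tv u a \<circ> tv u a = id"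
proof
  fix x
  show "(tv u a \<circ> tv u a) x = id x"
  proof (cases "x < n \<and> u x = 1")
    case True
    define j where "j = tv u a x"
    have j: "j < n" "\<forall>c\<in>C. c j = c x + c a" using tv_spec[OF t1 u] True by (auto simp: j_def)
    have uj: "u j = 1" using tv_u[OF t1 u] True by (simp add: j_def)
    have k: "tv u a j < n" "\<forall>c\<in>C. c (tv u a j) = c j + c a" using tv_spec[OF t1 u j(1) uj] by auto
    have gu: "u j + u a = 1" using uj u by simp
    have "tv u a j = x"
    proof (rule col_uniq[OF t1 lin_col2 u(1) gu, of "tv u a j" x])
      show "tv u a j < n" "x < n" using k True by auto
      show "c \<in> C \<Longrightarrow> c (tv u a j) = c j + c a" for c using k by blast
      show "c \<in> C \<Longrightarrow> c x = c j + c a" for c proof - assume "c \<in> C" hence "c j = c x + c a" using j(2) by blast thus ?thesis by simp qed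
    qed
    thus ?thesis by (simp add: j_def)
  next
    case False thus ?thesis by (simp add: tv_fix)
  qed
qed

lemma tv_comp:
  assumes t1: "tt = 1" and u: "u \<in> C" "u a = 0" and c: "c \<in> C"
  shows "c \<circ> tv u a = (if c a = 1 then c + u else c)"
proof
  fix x
  show "(c \<circ> tv u a) x = (if c a = 1 then c + u else c) x"
  proof (cases "x < n \<and> u x = 1")
    case True
    hence "c (tv u a x) = c x + c a" using tv_spec[OF t1 u] c by auto
    thus ?thesis using True by (cases "c a = 1") auto
  next
    case False
    hence "u x = 0" using out[OF u(1)] by (metis bit_not_one_iff not_le)
    thus ?thesis using False by (simp add: tv_fix)
  qed
qed

lemma tv_PAut:
  assumes t1: "tt = 1" and u: "u \<in> C" "u a = 0"
  shows "tv u a \<in> PAut n C"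
proof (rule PAut_invol[OF tv_invol[OF assms]])
  show "n \<le> x \<Longrightarrow> tv u a x = x" for x by (rule tv_out)
  show "c \<in> C \<Longrightarrow> c \<circ> tv u a \<in> C" for c using tv_comp[OF assms, of c] u by simp
qed

end

lemma fun_bit_eq: "(c::nat\<Rightarrow>bit) = d \<longleftrightarrow> (\<forall>x. c x = 1 \<longleftrightarrow> d x = 1)"
  by (metis bit_not_one_iff ext)

lemma fun_add_eq0: "(u::nat\<Rightarrow>bit) + v = 0 \<longleftrightarrow> u = v"
  by (metis add_left_cancel fun_add_self)

lemma supp_bound:
  fixes S :: "(nat \<Rightarrow> bit) set"
  assumes P: "finite P" "card P = 3"
    and S: "\<And>c. c \<in> S \<Longrightarrow> (\<forall>l. c l = 1 \<longrightarrow> l \<in> P) \<and> (c = 0 \<or> card {l. c l = 1} = 2)"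
  shows "card S \<le> 4"
proof -
  define supp where "supp c = {l. c l = 1}" for c :: "nat \<Rightarrow> bit"
  have inj: "inj_on supp S" by (rule inj_onI) (auto simp: supp_def fun_bit_eq)
  have "supp ` S \<subseteq> insert {} {B. B \<subseteq> P \<and> card B = 2}"
  proof
    fix B assume "B \<in> supp ` S"
    then obtain c where c: "c \<in> S" "B = supp c" by auto
    show "B \<in> insert {} {B. B \<subseteq> P \<and> card B = 2}"
    proof (cases "c = 0")
      case True thus ?thesis using c by (simp add: supp_def)
    next
      case False thus ?thesis using S[OF c(1)] c by (auto simp: supp_def)
    qed
  qed
  hence "card (supp ` S) \<le> card (insert {} {B. B \<subseteq> P \<and> card B = 2})"
    by (rule card_mono[rotated]) (simp add: P)
  also have "\<dots> \<le> Suc (card {B. B \<subseteq> P \<and> card B = 2})" by (rule card_insert_le_m1) simp_all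
  also have "card {B. B \<subseteq> P \<and> card B = 2} = 3" using n_subsets[OF P(1), of 2] P(2) by (simp add: numeral_eq_Suc)
  finally show ?thesis using card_image[OF inj] by simp
qed

lemma span2: "F2.span {u, v} \<subseteq> {0, u, v, u + v}"
proof
  fix x assume "x \<in> F2.span {u, v}"
  then obtain k where "x - f2scale k u \<in> F2.span {v}" using F2.span_insert[of u "{v}"] by auto
  then obtain k' where "x - f2scale k u - f2scale k' v \<in> F2.span {}" using F2.span_insert[of v "{}"] by auto
  hence "x = f2scale k u + f2scale k' v" by (simp add: algebra_simps)
  moreover have "f2scale 0 y = 0" "f2scale 1 y = y" for y by (auto simp: f2scale_def fun_eq_iff)
  ultimately show "x \<in> {0, u, v, u + v}" using bit_cases[of k] bit_cases[of k'] by auto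
qed

context cwc
begin

lemma notnz0: "c \<in> C \<Longrightarrow> x \<notin> nz \<Longrightarrow> c x = 0"
  by (metis (mono_tags, lifting) atLeastLessThan_iff bit_not_one_iff mem_Collect_eq not_le nz_def out zero_le)

lemma DC:
  assumes "u \<in> C" "v \<in> C" "u \<noteq> 0" "v \<noteq> 0" "u \<noteq> v"
  shows "\<exists>i\<in>nz. \<exists>j\<in>nz. \<exists>c\<in>C. c i \<noteq> c j"
proof (rule ccontr)
  assume H: "\<not> ?thesis"
  obtain i where i: "i \<in> nz" "u i = 1" using nz_ex assms by blast
  obtain l where l: "l \<in> nz" "v l = 1" using nz_ex assms by blast
  have "u = v"
  proof
    fix x show "u x = v x"
    proof (cases "x \<in> nz")
      case True
      hence "u x = u i" "v x = v l" using H assms i l by blast+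
      hence "v x = v i" using H assms i l True by metis
      thus ?thesis using H assms i l True by metis
    next
      case False thus ?thesis using notnz0[OF assms(1) False] notnz0[OF assms(2) False] by simp
    qed
  qed
  thus False using assms by simp
qed

lemma cls_sub_nz: "i \<in> nz \<Longrightarrow> cls i \<subseteq> nz"
  unfolding cls_def nz_def by (auto, metis)

lemma EXa:
  assumes uv: "u \<in> C" "v \<in> C" "u \<noteq> 0" "v \<noteq> 0" "u \<noteq> v"
  shows "\<exists>a\<in>nz. u a = 0"
proof (rule ccontr)
  assume "\<not> ?thesis"
  hence H: "\<forall>a\<in>nz. u a = 1" by simp
  have "nz = {l\<in>{0..<n}. u l = 1}" using H uv(1) by (auto simp: nz_def)
  hence cn: "card nz = w" using hweight_eq[OF uv(1)] wt[OF uv(1,3)] by simp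
  obtain i j c where ij: "i \<in> nz" "j \<in> nz" "c \<in> C" "c i \<noteq> c j" using DC[OF uv] by blast
  have "card (cls i) = card nz" using cls_card[OF ij(1)] cn by (simp add: tt_def)
  hence "cls i = nz" using cls_sub_nz[OF ij(1)] fin_nz by (simp add: card_subset_eq)
  hence "j \<in> cls i" using ij by simp
  thus False using ij by (auto simp: cls_def)
qed

lemma EXb:
  assumes t1: "tt = 1" and u: "u \<in> C" "u \<noteq> 0" and a: "a \<in> nz" "u a = 0" and big: "card C \<ge> 5"
  shows "\<exists>b\<in>nz. u b = 0 \<and> (\<exists>c\<in>C. c b \<noteq> c a)"
proof (rule ccontr)
  assume "\<not> ?thesis"
  hence H: "\<And>b c. b \<in> nz \<Longrightarrow> u b = 0 \<Longrightarrow> c \<in> C \<Longrightarrow> c b = c a" by blast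
  have "{b\<in>nz. u b = 0} \<subseteq> cls a" using H by (auto simp: cls_def nz_def)
  moreover have "card (cls a) = 1" using cls_card[OF a(1)] t1 by simp
  moreover have "a \<in> cls a" using cls_self[OF a(1)] .
  ultimately have "cls a = {a}" by (metis card_1_singletonE singletonD)
  hence Z: "{b\<in>nz. u b = 0} = {a}" using \<open>{b\<in>nz. u b = 0} \<subseteq> cls a\<close> a by auto
  have "nz = {l\<in>{0..<n}. u l = 1} \<union> {b\<in>nz. u b = 0}" using u(1) by (auto simp: nz_def)
  hence "nz = insert a {l\<in>{0..<n}. u l = 1}" using Z by auto
  moreover have "a \<notin> {l\<in>{0..<n}. u l = 1}" using a by simp
  ultimately have "card nz = Suc (card {l\<in>{0..<n}. u l = 1})" by simp
  hence cn: "card nz = w + 1" using hweight_eq[OF u(1)] wt[OF u] by simp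
  hence w2: "w = 2" using t1 by (simp add: tt_def)
  have "card C \<le> 4"
  proof (rule supp_bound[OF fin_nz])
    show "card nz = 3" using cn w2 by simp
    fix c assume c: "c \<in> C"
    show "(\<forall>l. c l = 1 \<longrightarrow> l \<in> nz) \<and> (c = 0 \<or> card {l. c l = 1} = 2)"
    proof
      show "\<forall>l. c l = 1 \<longrightarrow> l \<in> nz" using notnz0[OF c] by force
      show "c = 0 \<or> card {l. c l = 1} = 2" using wt[OF c] w2 by (auto simp: hweight_def)
    qed
  qed
  thus False using big by simp
qed

lemma D1:
  assumes "2 \<le> F2.dim C"
  shows "\<exists>u\<in>C. \<exists>v\<in>C. u \<noteq> 0 \<and> v \<noteq> 0 \<and> u \<noteq> v"
proof (rule ccontr)
  assume H: "\<not> ?thesis"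
  show False
  proof (cases "\<exists>u\<in>C. u \<noteq> 0")
    case True
    then obtain u where u: "u \<in> C" "u \<noteq> 0" by blast
    have "C \<subseteq> F2.span {u}"
    proof
      fix x assume "x \<in> C"
      hence "x = 0 \<or> x = u" using H u by blast
      thus "x \<in> F2.span {u}" using F2.span_zero F2.span_base by auto
    qed
    hence "F2.dim C \<le> card {u}" by (rule F2.dim_le_card) simp
    thus False using assms by simp
  next
    case False
    hence "C \<subseteq> F2.span {}" by auto
    hence "F2.dim C \<le> card ({}::(nat\<Rightarrow>bit) set)" by (rule F2.dim_le_card) simp
    thus False using assms by simp
  qed
qed

lemma D2:
  assumes "3 \<le> F2.dim C" "u \<in> C" "v \<in> C"
  shows "\<exists>x\<in>C. x \<notin> {0, u, v, u + v}"
proof (rule ccontr)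
  assume "\<not> ?thesis"
  hence "C \<subseteq> {0, u, v, u + v}" by blast
  also have "\<dots> \<subseteq> F2.span {u, v}" using F2.span_zero F2.span_base F2.span_add
    by (simp add: F2.span_base F2.span_add)
  finally have "F2.dim C \<le> card {u, v}" by (rule F2.dim_le_card) simp
  also have "\<dots> \<le> 2" by (simp add: card_insert_if)
  finally show False using assms by simp
qed

lemma D3:
  assumes "F2.dim C = 2"
  shows "\<exists>u\<in>C. \<exists>v\<in>C. u \<noteq> 0 \<and> v \<noteq> 0 \<and> u \<noteq> v \<and> C = {0, u, v, u + v}"
proof -
  obtain B where B: "B \<subseteq> C" "F2.independent B" "C \<subseteq> F2.span B" "card B = F2.dim C"
    by (rule F2.basis_exists)
  then obtain u v where uv: "B = {u, v}" "u \<noteq> v" using assms by (metis card_2_iff)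
  have "0 \<notin> B" using B(2) F2.dependent_zero by blast
  hence "u \<noteq> 0" "v \<noteq> 0" using uv by auto
  moreover have "u \<in> C" "v \<in> C" using B uv by auto
  moreover have "C = {0, u, v, u + v}"
  proof
    show "C \<subseteq> {0, u, v, u + v}" using B(3) span2[of u v] uv by auto
    show "{0, u, v, u + v} \<subseteq> C" using \<open>u \<in> C\<close> \<open>v \<in> C\<close> by auto
  qed
  ultimately show ?thesis using uv by blast
qed

end

lemma conj_permutes:
  assumes f: "bij_betw f A B" and s: "\<sigma> permutes A"
  shows "(\<lambda>x. if x \<in> B then f (\<sigma> (inv_into A f x)) else x) permutes B"
proof (rule bij_imp_permutes)
  have "bij_betw (f \<circ> \<sigma> \<circ> inv_into A f) B B"
    by (rule bij_betw_trans[OF bij_betw_inv_into[OF f] bij_betw_trans[OF permutes_imp_bij[OF s] f]])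
  thus "bij_betw (\<lambda>x. if x \<in> B then f (\<sigma> (inv_into A f x)) else x) B B"
    by (rule bij_betw_cong[THEN iffD1, rotated]) simp
  show "x \<notin> B \<Longrightarrow> (if x \<in> B then f (\<sigma> (inv_into A f x)) else x) = x" for x by simp
qed

lemma iso_S3:
  assumes P: "finite P" "card P = 3" and eq: "PAut n C = {\<sigma>. \<sigma> permutes P}"
  shows "PAut_group n C \<cong> sym_group 3"
proof -
  have "card P = card {1..3::nat}" using P by simp
  then obtain f where f: "bij_betw f P {1..3::nat}" using finite_same_card_bij[OF P(1)] by blast
  define g where "g = inv_into P f"
  have g: "bij_betw g {1..3} P" unfolding g_def by (rule bij_betw_inv_into[OF f])
  have gf: "g (f y) = y" if "y \<in> P" for y
    using f that by (simp add: g_def bij_betw_def inv_into_f_f)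
  have fg: "f (g x) = x" if "x \<in> {1..3}" for x
    using f that by (simp add: g_def bij_betw_def f_inv_into_f)
  have gP: "g x \<in> P" if "x \<in> {1..3}" for x using g that by (auto simp: bij_betw_def)
  have fP: "f y \<in> {1..3}" if "y \<in> P" for y using f that by (auto simp: bij_betw_def)
  define \<Phi> where "\<Phi> \<sigma> = (\<lambda>x. if x \<in> {1..3} then f (\<sigma> (g x)) else x)" for \<sigma> :: "nat \<Rightarrow> nat"
  define \<Psi> where "\<Psi> \<rho> = (\<lambda>y. if y \<in> P then g (\<rho> (f y)) else y)" for \<rho> :: "nat \<Rightarrow> nat"
  have \<Phi>p: "\<Phi> \<sigma> permutes {1..3}" if "\<sigma> permutes P" for \<sigma>
    using conj_permutes[OF f that] unfolding \<Phi>_def g_def by assumption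
  have \<Psi>p: "\<Psi> \<rho> permutes P" if "\<rho> permutes {1..3}" for \<rho>
  proof -
    have "(\<lambda>x. if x \<in> P then g (\<rho> (inv_into {1..3} g x)) else x) permutes P"
      by (rule conj_permutes[OF g that])
    moreover have "inv_into {1..3} g y = f y" if "y \<in> P" for y
      unfolding g_def by (rule inv_into_inv_into_eq[OF f that])
    moreover have "\<Psi> \<rho> = (\<lambda>x. if x \<in> P then g (\<rho> (inv_into {1..3} g x)) else x)"
    proof
      fix x show "\<Psi> \<rho> x = (if x \<in> P then g (\<rho> (inv_into {1..3} g x)) else x)"
        using calculation(2)[of x] by (simp add: \<Psi>_def)
    qed
    ultimately show ?thesis by (simp only:)
  qed
  have "\<Phi> \<in> iso (PAut_group n C) (sym_group 3)"
    unfolding iso_def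
  proof (intro CollectI conjI)
    show "\<Phi> \<in> hom (PAut_group n C) (sym_group 3)"
    proof (rule homI)
      fix \<sigma> assume "\<sigma> \<in> carrier (PAut_group n C)"
      thus "\<Phi> \<sigma> \<in> carrier (sym_group 3)" using \<Phi>p eq by (simp add: PAut_group_def sym_group_carrier)
    next
      fix \<sigma> \<tau> assume s: "\<sigma> \<in> carrier (PAut_group n C)" and t: "\<tau> \<in> carrier (PAut_group n C)"
      hence t': "\<tau> permutes P" using eq by (simp add: PAut_group_def)
      have "\<Phi> (\<sigma> \<circ> \<tau>) = \<Phi> \<sigma> \<circ> \<Phi> \<tau>"
      proof
        fix x show "\<Phi> (\<sigma> \<circ> \<tau>) x = (\<Phi> \<sigma> \<circ> \<Phi> \<tau>) x"
        proof (cases "x \<in> {1..3}")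
          case True
          hence "\<tau> (g x) \<in> P" using gP permutes_in_image[OF t'] by blast
          thus ?thesis using True fP gf by (simp add: \<Phi>_def)
        next
          case False hence "\<Phi> \<tau> x = x" "\<Phi> (\<sigma> \<circ> \<tau>) x = x" "\<Phi> \<sigma> x = x" by (auto simp: \<Phi>_def)
          thus ?thesis by simp
        qed
      qed
      thus "\<Phi> (\<sigma> \<otimes>\<^bsub>PAut_group n C\<^esub> \<tau>) = \<Phi> \<sigma> \<otimes>\<^bsub>sym_group 3\<^esub> \<Phi> \<tau>"
        by (simp add: PAut_group_def sym_group_def)
    qed
    have c1: "carrier (PAut_group n C) = {\<sigma>. \<sigma> permutes P}" by (simp add: PAut_group_def eq)
    have c2: "carrier (sym_group 3) = {p. p permutes {1..3}}" by (simp add: sym_group_def)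
    show "bij_betw \<Phi> (carrier (PAut_group n C)) (carrier (sym_group 3))"
      unfolding c1 c2
    proof (rule bij_betw_byWitness[where f'=\<Psi>])
      show "\<forall>\<sigma>\<in>{\<sigma>. \<sigma> permutes P}. \<Psi> (\<Phi> \<sigma>) = \<sigma>"
      proof
        fix \<sigma> assume s: "\<sigma> \<in> {\<sigma>. \<sigma> permutes P}"
        show "\<Psi> (\<Phi> \<sigma>) = \<sigma>"
        proof
          fix y show "\<Psi> (\<Phi> \<sigma>) y = \<sigma> y"
          proof (cases "y \<in> P")
            case True
            hence "\<sigma> y \<in> P" using s permutes_in_image by fastforce
            thus ?thesis using True fP gf by (simp add: \<Phi>_def \<Psi>_def)
          next
            case False thus ?thesis using s permutes_not_in by (fastforce simp: \<Psi>_def)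
          qed
        qed
      qed
      show "\<forall>\<rho>\<in>{p. p permutes {1..3}}. \<Phi> (\<Psi> \<rho>) = \<rho>"
      proof
        fix \<rho> assume r: "\<rho> \<in> {p. p permutes {1..3::nat}}"
        show "\<Phi> (\<Psi> \<rho>) = \<rho>"
        proof
          fix x show "\<Phi> (\<Psi> \<rho>) x = \<rho> x"
          proof (cases "x \<in> {1..3}")
            case True
            hence "\<rho> x \<in> {1..3}" using r permutes_in_image by fastforce
            thus ?thesis using True gP fg by (simp add: \<Phi>_def \<Psi>_def)
          next
            case False thus ?thesis using r permutes_not_in by (fastforce simp: \<Phi>_def)
          qed
        qed
      qed
      show "\<Phi> ` {\<sigma>. \<sigma> permutes P} \<subseteq> {p. p permutes {1..3}}" using \<Phi>p by auto
      show "\<Psi> ` {p. p permutes {1..3}} \<subseteq> {\<sigma>. \<sigma> permutes P}" using \<Psi>p by auto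
    qed
  qed
  thus ?thesis by (rule is_isoI)
qed


context cwc
begin

lemma sum3:
  assumes uv: "u \<in> C" "v \<in> C" "u \<noteq> 0" "v \<noteq> 0" "u \<noteq> v" and Ceq: "C = {0, u, v, u + v}"
  shows "3 * w = 2 * card nz"
proof -
  have uv0: "u + v \<noteq> 0" using uv(5) by (simp add: fun_add_eq0)
  have uvC: "u + v \<in> C" using uv by simp
  have hw: "hweight c = (\<Sum>l\<in>{0..<n}. if c l = 1 then 1 else 0)" if "c \<in> C" for c
    using hweight_eq[OF that] by (simp only: card_eq_sum sum.inter_filter[OF finite_atLeastLessThan])
  have per: "(if u l = 1 then 1 else 0) + (if v l = 1 then 1 else 0) + (if (u + v) l = 1 then 1 else 0)
      = (if l \<in> nz then 2 else (0::nat))" if "l \<in> {0..<n}" for l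
  proof (cases "l \<in> nz")
    case True
    then obtain c where c: "c \<in> C" "c l = 1" by (auto simp: nz_def)
    hence "\<not> (u l = 0 \<and> v l = 0)" using Ceq by auto
    thus ?thesis using True bit_cases[of "u l"] bit_cases[of "v l"] by auto
  next
    case False thus ?thesis using notnz0[OF uv(1) False] notnz0[OF uv(2) False] by simp
  qed
  have "3 * w = hweight u + hweight v + hweight (u + v)" using wt uv uvC uv0 by simp
  also have "\<dots> = (\<Sum>l\<in>{0..<n}. (if u l = 1 then 1 else 0) + (if v l = 1 then 1 else 0) + (if (u + v) l = 1 then 1 else 0))"
    using hw uv uvC by (simp add: sum.distrib)
  also have "\<dots> = (\<Sum>l\<in>{0..<n}. if l \<in> nz then 2 else (0::nat))" using per by (rule sum.cong[OF refl])
  also have "\<dots> = (\<Sum>l\<in>{l\<in>{0..<n}. l \<in> nz}. 2)" by (simp only: sum.inter_filter[OF finite_atLeastLessThan])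
  also have "{l\<in>{0..<n}. l \<in> nz} = nz" by (auto simp: nz_def)
  finally show ?thesis by simp
qed

lemma lin3: "lin (\<lambda>c. c x + c a + c b)"
  unfolding lin_def plus_fun_apply by (simp add: ac_simps)

definition EE :: "(nat \<Rightarrow> bit) set" where "EE = {c. (\<forall>l. c l = 1 \<longrightarrow> l \<in> nz) \<and> (c = 0 \<or> card {l. c l = 1} = 2)}"

lemma C_sub_EE: "w = 2 \<Longrightarrow> C \<subseteq> EE"
proof
  fix c assume w2: "w = 2" and c: "c \<in> C"
  show "c \<in> EE" unfolding EE_def
  proof (intro CollectI conjI)
    show "\<forall>l. c l = 1 \<longrightarrow> l \<in> nz" using notnz0[OF c] by force
    show "c = 0 \<or> card {l. c l = 1} = 2" using wt[OF c] w2 by (auto simp: hweight_def)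
  qed
qed

lemma EE_perm:
  assumes t: "\<tau> permutes nz" and c: "c \<in> EE"
  shows "c \<circ> \<tau> \<in> EE"
  unfolding EE_def
proof (intro CollectI conjI)
  show "\<forall>l. (c \<circ> \<tau>) l = 1 \<longrightarrow> l \<in> nz"
  proof (intro allI impI)
    fix l assume "(c \<circ> \<tau>) l = 1"
    hence "\<tau> l \<in> nz" using c by (auto simp: EE_def)
    thus "l \<in> nz" using t by (metis permutes_not_in)
  qed
  have "{l. (c \<circ> \<tau>) l = 1} = \<tau> -` {l. c l = 1}" by auto
  moreover have "card (\<tau> -` {l. c l = 1}) = card {l. c l = 1}"
    by (rule card_vimage_inj) (use permutes_inj[OF t] permutes_surj[OF t] in auto)
  moreover have "c \<circ> \<tau> = 0 \<longleftrightarrow> c = 0"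
  proof
    assume "c \<circ> \<tau> = 0"
    hence "c (\<tau> (inv_into UNIV \<tau> x)) = 0" for x by (metis comp_apply zero_fun_def)
    thus "c = 0" using permutes_inverses(1)[OF t] by (auto simp: fun_eq_iff)
  qed (simp add: zero_fun_def comp_def)
  ultimately show "c \<circ> \<tau> = 0 \<or> card {l. (c \<circ> \<tau>) l = 1} = 2" using c by (auto simp: EE_def)
qed

lemma finite_EE: "finite EE"
proof (rule finite_subset[OF _ finite_F2n[of n]])
  show "EE \<subseteq> F2n n"
  proof
    fix c assume "c \<in> EE"
    hence "c l = 1 \<Longrightarrow> l < n" for l by (auto simp: EE_def nz_def)
    thus "c \<in> F2n n" by (auto simp: F2n_def) (metis bit_not_one_iff not_le)
  qed
qed

lemma C_eq_EE:
  assumes w2: "w = 2" and cn: "card nz = 3" and cC: "card C = 4"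
  shows "C = EE"
proof -
  have "card EE \<le> 4"
    by (rule supp_bound[OF fin_nz cn]) (auto simp: EE_def)
  thus ?thesis using card_subset_eq[OF finite_EE C_sub_EE[OF w2]] cC card_mono[OF finite_EE C_sub_EE[OF w2]] by simp
qed

lemma PAut_char:
  assumes w2: "w = 2" and cn: "card nz = 3" and cC: "card C = 4" and n4: "n \<le> 4"
  shows "PAut n C = {\<sigma>. \<sigma> permutes nz}"
proof
  have CE: "C = EE" by (rule C_eq_EE[OF w2 cn cC])
  have nzsub: "nz \<subseteq> {0..<n}" by (auto simp: nz_def)
  show "{\<sigma>. \<sigma> permutes nz} \<subseteq> PAut n C"
  proof
    fix \<sigma> assume "\<sigma> \<in> {\<sigma>. \<sigma> permutes nz}"
    hence s: "\<sigma> permutes nz" by simp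
    have si: "inv_into UNIV \<sigma> permutes nz" by (rule permutes_inv[OF s])
    have pa: "perm_act \<sigma> c = c \<circ> inv_into UNIV \<sigma>" for c by (simp add: perm_act_def fun_eq_iff)
    have "perm_act \<sigma> ` EE = EE"
    proof
      show "perm_act \<sigma> ` EE \<subseteq> EE" using EE_perm[OF si] pa by auto
      show "EE \<subseteq> perm_act \<sigma> ` EE"
      proof
        fix c assume c: "c \<in> EE"
        have "c = perm_act \<sigma> (c \<circ> \<sigma>)" using pa permutes_inverses(1)[OF s] by (simp add: fun_eq_iff)
        thus "c \<in> perm_act \<sigma> ` EE" using EE_perm[OF s c] by blast
      qed
    qed
    moreover have "\<sigma> permutes {0..<n}" by (rule permutes_subset[OF s nzsub])
    ultimately show "\<sigma> \<in> PAut n C" using CE by (simp add: PAut_def)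
  qed
  show "PAut n C \<subseteq> {\<sigma>. \<sigma> permutes nz}"
  proof
    fix \<sigma> assume "\<sigma> \<in> PAut n C"
    hence s: "\<sigma> permutes {0..<n}" and im: "perm_act \<sigma> ` C = C" by (auto simp: PAut_def)
    have into: "\<sigma> l \<in> nz" if l: "l \<in> nz" for l
    proof -
      obtain c where c: "c \<in> C" "c l = 1" using l by (auto simp: nz_def)
      have "perm_act \<sigma> c \<in> C" using im c by blast
      moreover have "perm_act \<sigma> c (\<sigma> l) = 1"
        using c permutes_inverses(2)[OF s] by (simp add: perm_act_def)
      moreover have "\<sigma> l < n" using permutes_in_image[OF s] l nzsub by auto
      ultimately show ?thesis by (auto simp: nz_def)
    qed
    have inj: "inj_on \<sigma> nz" using permutes_inj[OF s] by (simp add: inj_on_def inj_def)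
    have img: "\<sigma> ` nz = nz" using endo_inj_surj[OF fin_nz _ inj] into by auto
    show "\<sigma> \<in> {\<sigma>. \<sigma> permutes nz}"
    proof (simp, rule inj_imp_permutes[OF inj fin_nz into])
      fix i assume i: "i \<notin> nz"
      show "\<sigma> i = i"
      proof (cases "i < n")
        case False thus ?thesis using s by (simp add: permutes_not_in)
      next
        case True
        have "\<sigma> i \<notin> nz"
        proof
          assume "\<sigma> i \<in> nz"
          then obtain j where "j \<in> nz" "\<sigma> j = \<sigma> i" using img by force
          thus False using permutes_inj[OF s] i by (metis injD)
        qed
        moreover have "\<sigma> i < n" using permutes_in_image[OF s] True by auto
        moreover have "card ({0..<n} - nz) \<le> 1" using cn n4 nzsub by (simp add: card_Diff_subset fin_nz)
        ultimately have "\<sigma> i \<in> {0..<n} - nz" "i \<in> {0..<n} - nz" using True i by auto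
        with \<open>card ({0..<n} - nz) \<le> 1\<close> show ?thesis
          using card_le_Suc0_iff_eq[of "{0..<n} - nz"] by auto
      qed
    qed
  qed
qed

end

lemma transpose_commute_disj:
  assumes "j \<noteq> i" "j \<noteq> i'" "j' \<noteq> i" "j' \<noteq> i'"
  shows "Transposition.transpose i i' \<circ> Transposition.transpose j j' =
         Transposition.transpose j j' \<circ> Transposition.transpose i i'"
  using assms by (auto simp: fun_eq_iff transpose_def)

context cwc
begin

lemma forward:
  assumes iso: "PAut_group n C \<cong> sym_group 3" and k2: "2 \<le> F2.dim C"
  shows "F2.dim C = 2 \<and> w = 2 \<and> n \<in> {3, 4}"
proof -
  obtain u v where uv: "u \<in> C" "v \<in> C" "u \<noteq> 0" "v \<noteq> 0" "u \<noteq> v" using D1[OF k2] by blast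
  obtain i0 where i0: "i0 \<in> nz" "u i0 = 1" using nz_ex uv by blast
  have t1: "tt \<ge> 1" by (rule tt_pos[OF i0(1)])
  show ?thesis
  proof (cases "tt \<ge> 2")
    case True
    obtain i j c where ij: "i \<in> nz" "j \<in> nz" "c \<in> C" "c i \<noteq> c j" using DC[OF uv] by blast
    have ex2: "\<exists>i'. i' \<in> cls l \<and> i' \<noteq> l" if "l \<in> nz" for l
    proof (rule ccontr)
      assume "\<not> ?thesis"
      hence "cls l \<subseteq> {l}" by auto
      hence "card (cls l) \<le> card {l}" by (rule card_mono[rotated]) simp
      hence "card (cls l) \<le> 1" by simp
      thus False using cls_card[OF that] True by simp
    qed
    obtain i' where i': "i' \<in> cls i" "i' \<noteq> i" using ex2[OF ij(1)] by blast
    obtain j' where j': "j' \<in> cls j" "j' \<noteq> j" using ex2[OF ij(2)] by blast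
    have ci: "\<And>d. d \<in> C \<Longrightarrow> d i' = d i" "i' < n" using i' by (auto simp: cls_def)
    have cj: "\<And>d. d \<in> C \<Longrightarrow> d j' = d j" "j' < n" using j' by (auto simp: cls_def)
    have "i < n" "j < n" using ij by (auto simp: nz_def)
    define s1 where "s1 = Transposition.transpose i i'"
    define s2 where "s2 = Transposition.transpose j j'"
    have P1: "s1 \<in> PAut n C" unfolding s1_def
    proof (rule swap_PAut)
      show "i < n" "i' < n" using ci \<open>i < n\<close> by auto
      fix d assume "d \<in> C" thus "d i = d i'" using ci(1)[of d] by simp
    qed
    have P2: "s2 \<in> PAut n C" unfolding s2_def
    proof (rule swap_PAut)
      show "j < n" "j' < n" using cj \<open>j < n\<close> by auto
      fix d assume "d \<in> C" thus "d j = d j'" using cj(1)[of d] by simp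
    qed
    have d: "j \<noteq> i" "j \<noteq> i'" "j' \<noteq> i" "j' \<noteq> i'"
      using ij ci(1)[OF ij(3)] cj(1)[OF ij(3)] by auto
    show ?thesis
    proof (rule FalseE, rule S3_no_klein[OF iso P1 P2])
      show "s1 \<circ> s1 = id" "s2 \<circ> s2 = id" by (simp_all add: s1_def s2_def)
      show "s1 \<circ> s2 = s2 \<circ> s1" unfolding s1_def s2_def by (rule transpose_commute_disj[OF d])
      show "s1 \<noteq> id" using i' by (simp add: s1_def transpose_eq_id_iff)
      show "s2 \<noteq> id" using j' by (simp add: s2_def transpose_eq_id_iff)
      have "s1 i = i'" "s2 i = i" using d by (auto simp: s1_def s2_def transpose_def)
      thus "s1 \<noteq> s2" using i' by auto
    qed
  next
    case False
    hence tt1: "tt = 1" using t1 by simp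
    obtain a where a: "a \<in> nz" "u a = 0" using EXa[OF uv] by blast
    obtain ca where ca: "ca \<in> C" "ca a = 1" using a by (auto simp: nz_def)
    have i0n: "i0 < n" using i0 by (auto simp: nz_def)
    have Pa: "tv u a \<in> PAut n C" by (rule tv_PAut[OF tt1 uv(1) a(2)])
    have Ia: "tv u a \<circ> tv u a = id" by (rule tv_invol[OF tt1 uv(1) a(2)])
    have Na: "tv u a \<noteq> id" using tv_ne[OF tt1 uv(1) a(2) i0n i0(2) ca] by auto
    show ?thesis
    proof (cases "F2.dim C \<ge> 3")
      case True
      obtain x where x: "x \<in> C" "x \<notin> {0, u, v, u + v}" using D2[OF True uv(1,2)] by blast
      have "card {0, u, v, u + v, x} = 5"
        using uv x fun_add_eq0[of u v] by (auto simp: card_insert_if fun_add_eq0)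
      moreover have "{0, u, v, u + v, x} \<subseteq> C" using uv x by auto
      ultimately have big: "card C \<ge> 5" by (metis card_mono fin)
      obtain b cb where b: "b \<in> nz" "u b = 0" "cb \<in> C" "cb b \<noteq> cb a"
        using EXb[OF tt1 uv(1) uv(3) a big] by blast
      have Pb: "tv u b \<in> PAut n C" by (rule tv_PAut[OF tt1 uv(1) b(2)])
      have Ib: "tv u b \<circ> tv u b = id" by (rule tv_invol[OF tt1 uv(1) b(2)])
      have Nb: "tv u b \<noteq> id"
      proof -
        obtain cb' where "cb' \<in> C" "cb' b = 1" using b by (auto simp: nz_def)
        thus ?thesis using tv_ne[OF tt1 uv(1) b(2) i0n i0(2)] by auto
      qed
      have comm: "tv u a \<circ> tv u b = tv u b \<circ> tv u a"
      proof
        fix y show "(tv u a \<circ> tv u b) y = (tv u b \<circ> tv u a) y"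
        proof (cases "y < n \<and> u y = 1")
          case True
          define p where "p = tv u b y"
          define q where "q = tv u a y"
          have p: "p < n" "\<forall>c\<in>C. c p = c y + c b" "u p = 1"
            using tv_spec[OF tt1 uv(1) b(2)] tv_u[OF tt1 uv(1) b(2)] True by (auto simp: p_def)
          have q: "q < n" "\<forall>c\<in>C. c q = c y + c a" "u q = 1"
            using tv_spec[OF tt1 uv(1) a(2)] tv_u[OF tt1 uv(1) a(2)] True by (auto simp: q_def)
          have p2: "tv u a p < n" "\<forall>c\<in>C. c (tv u a p) = c p + c a"
            using tv_spec[OF tt1 uv(1) a(2) p(1) p(3)] by auto
          have q2: "tv u b q < n" "\<forall>c\<in>C. c (tv u b q) = c q + c b"
            using tv_spec[OF tt1 uv(1) b(2) q(1) q(3)] by auto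
          have gu: "u y + u a + u b = 1" using True a b by simp
          have "tv u a p = tv u b q"
          proof (rule col_uniq[OF tt1 lin3 uv(1) gu])
            show "tv u a p < n" "tv u b q < n" using p2 q2 by auto
            show "c (tv u a p) = c y + c a + c b" if "c \<in> C" for c
              using p2(2) p(2) that by (simp add: ac_simps)
            show "c (tv u b q) = c y + c a + c b" if "c \<in> C" for c
              using q2(2) q(2) that by (simp add: ac_simps)
          qed
          thus ?thesis by (simp add: p_def q_def)
        next
          case False thus ?thesis by (simp add: tv_fix)
        qed
      qed
      have Nab: "tv u a \<noteq> tv u b"
      proof
        assume eq: "tv u a = tv u b"
        have "cb (tv u a i0) = cb i0 + cb a" "cb (tv u b i0) = cb i0 + cb b"
          using tv_spec[OF tt1 uv(1) a(2) i0n i0(2)] tv_spec[OF tt1 uv(1) b(2) i0n i0(2)] b(3) by auto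
        hence "cb i0 + cb a = cb i0 + cb b" using eq by simp
        thus False using b(4) by simp
      qed
      show ?thesis by (rule FalseE, rule S3_no_klein[OF iso Pa Pb Ia Ib comm Na Nb Nab])
    next
      case False
      hence k2': "F2.dim C = 2" using k2 by simp
      show ?thesis
      proof (cases "card ({0..<n} - nz) \<ge> 2")
        case True
        obtain z1 z2 where z: "z1 \<in> {0..<n} - nz" "z2 \<in> {0..<n} - nz" "z1 \<noteq> z2"
        proof -
          from True obtain Z where "Z \<subseteq> {0..<n} - nz" "card Z = 2"
            by (meson obtain_subset_with_card_n)
          then obtain z1 z2 where "Z = {z1, z2}" "z1 \<noteq> z2" by (metis card_2_iff)
          thus ?thesis using that \<open>Z \<subseteq> {0..<n} - nz\<close> by auto
        qed
        define s1 where "s1 = Transposition.transpose z1 z2"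
        have uz: "u z1 = 0" "u z2 = 0" using notnz0[OF uv(1)] z by auto
        have P1: "s1 \<in> PAut n C" unfolding s1_def
        proof (rule swap_PAut)
          show "z1 < n" "z2 < n" using z by auto
          fix d assume "d \<in> C" thus "d z1 = d z2" using notnz0[of d z1] notnz0[of d z2] z by simp
        qed
        have fix1: "tv u a z1 = z1" "tv u a z2 = z2" using uz by (simp_all add: tv_fix)
        have comm: "s1 \<circ> tv u a = tv u a \<circ> s1"
        proof
          fix y show "(s1 \<circ> tv u a) y = (tv u a \<circ> s1) y"
          proof (cases "y = z1 \<or> y = z2")
            case True thus ?thesis using fix1 by (auto simp: s1_def)
          next
            case False
            have "tv u a y \<noteq> z1 \<and> tv u a y \<noteq> z2"
            proof (cases "y < n \<and> u y = 1")
              case True thus ?thesis using tv_u[OF tt1 uv(1) a(2)] uz by (metis zero_neq_one)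
            next
              case False thus ?thesis using \<open>\<not> (y = z1 \<or> y = z2)\<close> by (simp add: tv_fix)
            qed
            thus ?thesis using False by (simp add: s1_def transpose_def)
          qed
        qed
        show ?thesis
        proof (rule FalseE, rule S3_no_klein[OF iso P1 Pa _ Ia comm])
          show "s1 \<circ> s1 = id" by (simp add: s1_def)
          show "s1 \<noteq> id" using z by (auto simp: s1_def transpose_eq_id_iff)
          show "tv u a \<noteq> id" by (rule Na)
          have "s1 z1 = z2" by (simp add: s1_def)
          thus "s1 \<noteq> tv u a" using fix1 z by auto
        qed
      next
        case False
        obtain u' v' where uv': "u' \<in> C" "v' \<in> C" "u' \<noteq> 0" "v' \<noteq> 0" "u' \<noteq> v'" "C = {0, u', v', u' + v'}"
          using D3[OF k2'] by blast
        have s3: "3 * w = 2 * card nz" by (rule sum3[OF uv'])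
        have cm: "mlt (\<lambda>c. c i0) + card nz = 2 * w" by (rule count_main[OF lin_col uv(1) i0(2)])
        have "mlt (\<lambda>c. c i0) = 1" using mlt_tt[OF lin_col uv(1) i0(2)] tt1 by simp
        hence w2: "w = 2" and cn: "card nz = 3" using s3 cm by simp_all
        have nzsub: "nz \<subseteq> {0..<n}" by (auto simp: nz_def)
        have "card ({0..<n} - nz) = n - 3" using cn nzsub by (simp add: card_Diff_subset fin_nz)
        moreover have "card nz \<le> n" using card_mono[OF _ nzsub] by simp
        ultimately have "n \<in> {3, 4}" using False cn by auto
        thus ?thesis using k2' w2 by simp
      qed
    qed
  qed
qed

lemma backward:
  assumes k2: "F2.dim C = 2" and w2: "w = 2" and n34: "n \<in> {3, 4}"
  shows "PAut_group n C \<cong> sym_group 3"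
proof -
  obtain u v where uv: "u \<in> C" "v \<in> C" "u \<noteq> 0" "v \<noteq> 0" "u \<noteq> v" "C = {0, u, v, u + v}"
    using D3[OF k2] by blast
  have "3 * w = 2 * card nz" by (rule sum3[OF uv])
  hence cn: "card nz = 3" using w2 by simp
  have "card C = 4" using uv by (auto simp: card_insert_if fun_add_eq0)
  hence "PAut n C = {\<sigma>. \<sigma> permutes nz}" using PAut_char[OF w2 cn] n34 by auto
  thus ?thesis by (rule iso_S3[OF fin_nz cn])
qed

end

theorem theorem5p8:
  fixes n k w :: nat and C :: "(nat \<Rightarrow> bit) set"
  assumes "constant_weight_code n w C"
    and "code_dim C = k"
    and "k \<ge> 2"
  shows "PAut_group n C \<cong> sym_group 3 \<longleftrightarrow> k = 2 \<and> w = 2 \<and> n \<in> {3, 4}"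
proof -
  interpret cwc n w C by unfold_locales (rule assms(1))
  have dk: "F2.dim C = k" using assms(2) by (simp add: code_dim_def)
  show ?thesis
  proof
    assume "PAut_group n C \<cong> sym_group 3"
    thus "k = 2 \<and> w = 2 \<and> n \<in> {3, 4}" using forward dk assms(3) by blast
  next
    assume "k = 2 \<and> w = 2 \<and> n \<in> {3, 4}"
    thus "PAut_group n C \<cong> sym_group 3" using backward dk by blast
  qed
qed


end
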